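(* Let $\alpha>0$. Consider the model $Y_i=f(x_i)+V_i^{1/2}\xi_i$, $i=1,\dots,n$, $x_i=i/n$, with $\xi_1,\dots,\xi_n\overset{iid}{\sim}N(0,1)$, $f\in\mathcal{H}_\alpha(M)$ and $V=(V_1,\dots,V_n)\in[0,M]^n$. Let $R_i=Y_{i+1}-Y_i$ ($1\le i\le n-1$), $S_i=Y_{i+3}-Y_i$ ($1\le i\le n-3$), and $$\hat T_1=\frac1n\sum_{i=1}^{n-3}\left(\tfrac13(R_{i+1}^4+S_i^4)-2R_{i+1}^2S_i^2\right).$$ With $W_i=V_{i+1}+V_i$, $\delta_i=f(x_{i+1})-f(x_i)$ and $$\tilde T_1=\frac1n\sum_{i=1}^{n-3}\big(W_{i+1}+\delta_{i+1}^2-V_i-V_{i+3}-(f(x_{i+3})-f(x_i))^2\big)^2,$$ we have $E_{f,V}\big(|\hat T_1-\tilde T_1|^2\big)\lesssim n^{-1}+n^{-8\alpha}$, with an implicit constant not depending on $n,f,V$.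
   Context: $\mathcal{H}_\alpha(M)$: functions $g:[0,1]\to\mathbb{R}$ with $|g^{(\lfloor\alpha\rfloor)}(x)-g^{(\lfloor\alpha\rfloor)}(y)|\le M|x-y|^{\alpha-\lfloor\alpha\rfloor}$ for all $x,y$ and $\|g^{(k)}\|_\infty\le M$ for $k=0,\dots,\lfloor\alpha\rfloor$; $M$ is a fixed sufficiently large constant. $E_{f,V}$ is expectation under the model. *)

theory Defs
  imports "HOL-Probability.Probability"
begin

text \<open>Hoelder class H_alpha(M) on [0,1]. D j plays the role of the j-th derivative
  g^(j) on [0,1] (one-sided at the endpoints), for j = 0..floor alpha.\<close>
definition holder_class :: "real \<Rightarrow> real \<Rightarrow> (real \<Rightarrow> real) \<Rightarrow> bool" where
  "holder_class \<alpha> M g \<longleftrightarrow>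
     (\<exists>D :: nat \<Rightarrow> real \<Rightarrow> real.
        (\<forall>x\<in>{0..1}. D 0 x = g x) \<and>
        (\<forall>j < nat \<lfloor>\<alpha>\<rfloor>. \<forall>x\<in>{0..1}.
            (D j has_real_derivative D (Suc j) x) (at x within {0..1})) \<and>
        (\<forall>j \<le> nat \<lfloor>\<alpha>\<rfloor>. \<forall>x\<in>{0..1}. \<bar>D j x\<bar> \<le> M) \<and>
        (\<forall>x\<in>{0..1}. \<forall>y\<in>{0..1}.
            \<bar>D (nat \<lfloor>\<alpha>\<rfloor>) x - D (nat \<lfloor>\<alpha>\<rfloor>) y\<bar> \<le> M * \<bar>x - y\<bar> powr (\<alpha> - of_int \<lfloor>\<alpha>\<rfloor>)))"

definition obsY :: "nat \<Rightarrow> (real \<Rightarrow> real) \<Rightarrow> (nat \<Rightarrow> real) \<Rightarrow> (nat \<Rightarrow> real) \<Rightarrow> nat \<Rightarrow> real" where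
  "obsY n f V \<xi> i = f (real i / real n) + sqrt (V i) * \<xi> i"

definition T1_hat :: "nat \<Rightarrow> (real \<Rightarrow> real) \<Rightarrow> (nat \<Rightarrow> real) \<Rightarrow> (nat \<Rightarrow> real) \<Rightarrow> real" where
  "T1_hat n f V \<xi> =
     (let Y = obsY n f V \<xi>;
          R = (\<lambda>i. Y (i + 1) - Y i);
          S = (\<lambda>i. Y (i + 3) - Y i)
      in (1 / real n) * (\<Sum>i = 1..n - 3.
            (1/3) * (R (i + 1) ^ 4 + S i ^ 4) - 2 * R (i + 1) ^ 2 * S i ^ 2))"

definition T1_tilde :: "nat \<Rightarrow> (real \<Rightarrow> real) \<Rightarrow> (nat \<Rightarrow> real) \<Rightarrow> real" where
  "T1_tilde n f V =
     (let x = (\<lambda>i. real i / real n);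
          W = (\<lambda>i. V (i + 1) + V i);
          \<delta> = (\<lambda>i. f (x (i + 1)) - f (x i))
      in (1 / real n) * (\<Sum>i = 1..n - 3.
            (W (i + 1) + \<delta> (i + 1) ^ 2 - V i - V (i + 3) - (f (x (i + 3)) - f (x i)) ^ 2) ^ 2))"

definition noise_law :: "nat \<Rightarrow> (nat \<Rightarrow> real) measure" where
  "noise_law n = PiM {1..n} (\<lambda>_. density lborel std_normal_density)"

end

theory Submission
  imports Defs
begin


abbreviation "NN \<equiv> density lborel std_normal_density"

lemma probN: "prob_space NN" by (rule prob_space_normal_density) simp

lemma sets_NN: "sets NN = sets borel" by simp

lemma prob_noise: "prob_space (noise_law n)"
  unfolding noise_law_def by (intro prob_space_PiM probN)

lemma coord_meas_N: "j \<in> {1..n} \<Longrightarrow> (\<lambda>\<omega>. \<omega> j) \<in> measurable (noise_law n) NN"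
  unfolding noise_law_def by (rule measurable_component_singleton)

lemma coord_meas: "j \<in> {1..n} \<Longrightarrow> (\<lambda>\<omega>. \<omega> j) \<in> borel_measurable (noise_law n)"
  using coord_meas_N measurable_cong_sets[OF refl sets_NN] by blast

lemma distr_coord: "j \<in> {1..n} \<Longrightarrow> distr (noise_law n) NN (\<lambda>\<omega>. \<omega> j) = NN"
  unfolding noise_law_def by (rule distr_PiM_component) (auto intro: probN)

lemma coord_integral:
  fixes g :: "real \<Rightarrow> real"
  assumes j: "j \<in> {1..n}" and g: "g \<in> borel_measurable borel"
  shows "integral\<^sup>L (noise_law n) (\<lambda>\<omega>. g (\<omega> j)) = integral\<^sup>L NN g"
proof -
  have g': "g \<in> borel_measurable NN" using g measurable_cong_sets[OF sets_NN refl] by blast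
  have "integral\<^sup>L NN g = integral\<^sup>L (distr (noise_law n) NN (\<lambda>\<omega>. \<omega> j)) g"
    using distr_coord[OF j] by simp
  also have "\<dots> = integral\<^sup>L (noise_law n) (\<lambda>\<omega>. g (\<omega> j))"
    using coord_meas_N[OF j] g' by (rule integral_distr)
  finally show ?thesis by simp
qed

lemma coord_integrable:
  fixes g :: "real \<Rightarrow> real"
  assumes j: "j \<in> {1..n}" and g: "g \<in> borel_measurable borel" and i: "integrable NN g"
  shows "integrable (noise_law n) (\<lambda>\<omega>. g (\<omega> j))"
proof -
  have g': "g \<in> borel_measurable NN" using g measurable_cong_sets[OF sets_NN refl] by blast
  have "integrable (distr (noise_law n) NN (\<lambda>\<omega>. \<omega> j)) g"
    using distr_coord[OF j] i by simp
  then show ?thesis by (subst (asm) integrable_distr_eq[OF coord_meas_N[OF j]]) (use g' in auto)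
qed

definition mom :: "nat \<Rightarrow> real" where "mom k = integral\<^sup>L NN (\<lambda>x. x ^ k)"

lemma mom_lborel: "mom k = integral\<^sup>L lborel (\<lambda>x. std_normal_density x * x ^ k)"
  unfolding mom_def by (subst integral_density) (auto simp: normal_density_nonneg)

lemma mom_1: "mom 1 = 0"
  using integral_std_normal_moment_odd[of 0] by (simp add: mom_lborel)
lemma mom_3: "mom 3 = 0"
  using integral_std_normal_moment_odd[of 1] by (simp add: mom_lborel)
lemma mom_2: "mom 2 = 1"
  using integral_std_normal_moment_even[of 1] by (simp add: mom_lborel)
lemma mom_4: "mom 4 = 3"
  using integral_std_normal_moment_even[of 2] by (simp add: mom_lborel fact_numeral)
lemma mom_8_nonneg: "mom 8 \<ge> 0"
  unfolding mom_lborel by (rule integral_nonneg_AE) (auto simp: normal_density_nonneg)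

lemma integrable_NN_abs: "integrable NN (\<lambda>x. \<bar>x\<bar> ^ k)"
  by (subst integrable_density) (auto simp: normal_density_nonneg integrable_std_normal_moment_abs)

lemma coord_mom: "j \<in> {1..n} \<Longrightarrow> integral\<^sup>L (noise_law n) (\<lambda>\<omega>. \<omega> j ^ k) = mom k"
  unfolding mom_def by (rule coord_integral) auto



lemma pow_abs_add_le: "\<bar>x + y\<bar> ^ k \<le> 2 ^ k * (\<bar>x\<bar> ^ k + \<bar>y::real\<bar> ^ k)"
proof -
  have "\<bar>x + y\<bar> \<le> 2 * max \<bar>x\<bar> \<bar>y\<bar>" by auto
  then have "\<bar>x + y\<bar> ^ k \<le> (2 * max \<bar>x\<bar> \<bar>y\<bar>) ^ k" by (intro power_mono) auto
  also have "\<dots> = 2 ^ k * max \<bar>x\<bar> \<bar>y\<bar> ^ k" by (simp add: power_mult_distrib)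
  also have "max \<bar>x\<bar> \<bar>y\<bar> ^ k \<le> \<bar>x\<bar> ^ k + \<bar>y\<bar> ^ k" by (cases "\<bar>x\<bar> \<le> \<bar>y\<bar>") (auto simp: max_def)
  finally show ?thesis by simp
qed

definition good :: "nat \<Rightarrow> ((nat \<Rightarrow> real) \<Rightarrow> real) \<Rightarrow> bool" where
  "good n X \<longleftrightarrow> X \<in> borel_measurable (noise_law n) \<and> (\<forall>k. integrable (noise_law n) (\<lambda>\<omega>. \<bar>X \<omega>\<bar> ^ k))"

lemma good_meas: "good n X \<Longrightarrow> X \<in> borel_measurable (noise_law n)" by (simp add: good_def)

lemma good_integrable: "good n X \<Longrightarrow> integrable (noise_law n) X"
proof -
  assume "good n X"
  then have m: "X \<in> borel_measurable (noise_law n)" and "integrable (noise_law n) (\<lambda>\<omega>. \<bar>X \<omega>\<bar> ^ 1)"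
    unfolding good_def by blast+
  then have "integrable (noise_law n) (\<lambda>\<omega>. \<bar>X \<omega>\<bar>)" by simp
  then show ?thesis using integrable_abs_iff[OF m] by blast
qed

lemma good_const[simp, intro]: "good n (\<lambda>\<omega>. c)"
proof -
  interpret prob_space "noise_law n" by (rule prob_noise)
  show ?thesis unfolding good_def by auto
qed

lemma good_coord[intro]: "j \<in> {1..n} \<Longrightarrow> good n (\<lambda>\<omega>. \<omega> j)"
  unfolding good_def using coord_meas[of j n] coord_integrable[OF _ _ integrable_NN_abs] by auto

lemma good_add[intro]:
  assumes "good n X" "good n Y" shows "good n (\<lambda>\<omega>. X \<omega> + Y \<omega>)"
  unfolding good_def
proof safe
  have [measurable]: "X \<in> borel_measurable (noise_law n)" "Y \<in> borel_measurable (noise_law n)"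
    using assms by (auto simp: good_def)
  show "(\<lambda>\<omega>. X \<omega> + Y \<omega>) \<in> borel_measurable (noise_law n)" by measurable
  fix k
  show "integrable (noise_law n) (\<lambda>\<omega>. \<bar>X \<omega> + Y \<omega>\<bar> ^ k)"
  proof (rule Bochner_Integration.integrable_bound)
    show "integrable (noise_law n) (\<lambda>\<omega>. 2 ^ k * (\<bar>X \<omega>\<bar> ^ k + \<bar>Y \<omega>\<bar> ^ k))"
      using assms by (intro integrable_mult_right Bochner_Integration.integrable_add) (auto simp: good_def)
    show "(\<lambda>\<omega>. \<bar>X \<omega> + Y \<omega>\<bar> ^ k) \<in> borel_measurable (noise_law n)" by measurable
    show "AE x in noise_law n. norm (\<bar>X x + Y x\<bar> ^ k) \<le> norm (2 ^ k * (\<bar>X x\<bar> ^ k + \<bar>Y x\<bar> ^ k))"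
    proof (intro AE_I2)
      fix x
      have "0 \<le> 2 ^ k * (\<bar>X x\<bar> ^ k + \<bar>Y x\<bar> ^ k)" by simp
      then show "norm (\<bar>X x + Y x\<bar> ^ k) \<le> norm (2 ^ k * (\<bar>X x\<bar> ^ k + \<bar>Y x\<bar> ^ k))"
        using pow_abs_add_le[of "X x" "Y x" k] by (simp only: real_norm_def abs_of_nonneg zero_le_power abs_ge_zero)
    qed
  qed
qed

lemma good_mult[intro]:
  assumes "good n X" "good n Y" shows "good n (\<lambda>\<omega>. X \<omega> * Y \<omega>)"
  unfolding good_def
proof safe
  have [measurable]: "X \<in> borel_measurable (noise_law n)" "Y \<in> borel_measurable (noise_law n)"
    using assms by (auto simp: good_def)
  show "(\<lambda>\<omega>. X \<omega> * Y \<omega>) \<in> borel_measurable (noise_law n)" by measurable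
  fix k
  show "integrable (noise_law n) (\<lambda>\<omega>. \<bar>X \<omega> * Y \<omega>\<bar> ^ k)"
  proof (rule Bochner_Integration.integrable_bound)
    show "integrable (noise_law n) (\<lambda>\<omega>. \<bar>X \<omega>\<bar> ^ (2*k) + \<bar>Y \<omega>\<bar> ^ (2*k))"
      using assms by (intro Bochner_Integration.integrable_add) (auto simp: good_def)
    show "(\<lambda>\<omega>. \<bar>X \<omega> * Y \<omega>\<bar> ^ k) \<in> borel_measurable (noise_law n)" by measurable
    have "\<bar>a * b\<bar> ^ k \<le> \<bar>a\<bar> ^ (2*k) + \<bar>b\<bar> ^ (2*k)" for a b :: real
    proof -
      have "\<bar>a * b\<bar> ^ k = \<bar>a\<bar>^k * \<bar>b\<bar>^k" by (simp add: abs_mult power_mult_distrib)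
      also have "\<dots> \<le> (\<bar>a\<bar>^k)^2 + (\<bar>b\<bar>^k)^2" 
      proof -
        have p: "0 \<le> \<bar>a\<bar>^k * \<bar>b\<bar>^k" by simp
        have "2 * (\<bar>a\<bar>^k * \<bar>b\<bar>^k) \<le> (\<bar>a\<bar>^k)^2 + (\<bar>b\<bar>^k)^2"
          using sum_squares_bound[of "\<bar>a\<bar>^k" "\<bar>b\<bar>^k"] by (simp only: mult.assoc)
        with p show ?thesis by linarith
      qed
      finally show ?thesis by (simp add: power_mult[symmetric] mult.commute)
    qed
    then show "AE x in noise_law n. norm (\<bar>X x * Y x\<bar> ^ k) \<le> norm (\<bar>X x\<bar> ^ (2*k) + \<bar>Y x\<bar> ^ (2*k))"
      by (intro AE_I2) (simp del: power_abs)
  qed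
qed

lemma good_minus[intro]: "good n X \<Longrightarrow> good n Y \<Longrightarrow> good n (\<lambda>\<omega>. X \<omega> - Y \<omega>)"
proof -
  assume a: "good n X" "good n Y"
  have "good n (\<lambda>\<omega>. X \<omega> + (-1) * Y \<omega>)" using a by (intro good_add good_mult good_const)
  then show ?thesis by simp
qed

lemma good_power[intro]: "good n X \<Longrightarrow> good n (\<lambda>\<omega>. X \<omega> ^ k)"
  by (induction k) (auto intro!: good_mult)

lemma good_sum[intro]: "(\<And>i. i \<in> S \<Longrightarrow> good n (X i)) \<Longrightarrow> good n (\<lambda>\<omega>. \<Sum>i\<in>S. X i \<omega>)"
proof (induction S rule: infinite_finite_induct)
  case (insert x F) then show ?case by (simp, intro good_add) auto
qed auto

lemmas good_intros = good_const good_coord good_add good_mult good_minus good_power good_sum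

lemma indep_coords: "n \<ge> 1 \<Longrightarrow> prob_space.indep_vars (noise_law n) (\<lambda>_. NN) (\<lambda>i \<omega>. \<omega> i) {1..n}"
proof -
  assume n: "n \<ge> 1"
  interpret prob_space "noise_law n" by (rule prob_noise)
  show ?thesis
  proof (subst indep_vars_iff_distr_eq_PiM')
    show "{1..n} \<noteq> {}" using n by auto
    show "random_variable NN (\<lambda>\<omega>. \<omega> i)" if "i \<in> {1..n}" for i using coord_meas_N[OF that] .
    have "distr (noise_law n) (Pi\<^sub>M {1..n} (\<lambda>i. NN)) (\<lambda>x. restrict x {1..n})
        = distr (noise_law n) (noise_law n) (\<lambda>x. x)"
      by (intro distr_cong) (auto simp: noise_law_def space_PiM)
    also have "\<dots> = noise_law n" by (rule distr_id)
    also have "\<dots> = Pi\<^sub>M {1..n} (\<lambda>i. distr (noise_law n) NN (\<lambda>\<omega>. \<omega> i))"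
      unfolding noise_law_def by (intro PiM_cong refl distr_coord[unfolded noise_law_def, symmetric]) 
    finally show "distr (noise_law n) (Pi\<^sub>M {1..n} (\<lambda>i. NN)) (\<lambda>x. restrict x {1..n}) =
        Pi\<^sub>M {1..n} (\<lambda>i. distr (noise_law n) NN (\<lambda>\<omega>. \<omega> i))" .
  qed
qed

lemma indep_int:
  fixes X Y :: "(nat \<Rightarrow> real) \<Rightarrow> real"
  assumes n: "n \<ge> 1" and AB: "A \<subseteq> {1..n}" "B \<subseteq> {1..n}" "A \<inter> B = {}"
    and X: "X \<in> borel_measurable (PiM A (\<lambda>_. NN))" and Y: "Y \<in> borel_measurable (PiM B (\<lambda>_. NN))"
    and iX: "integrable (noise_law n) (\<lambda>\<omega>. X (restrict \<omega> A))"
    and iY: "integrable (noise_law n) (\<lambda>\<omega>. Y (restrict \<omega> B))"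
  shows "integral\<^sup>L (noise_law n) (\<lambda>\<omega>. X (restrict \<omega> A) * Y (restrict \<omega> B))
       = integral\<^sup>L (noise_law n) (\<lambda>\<omega>. X (restrict \<omega> A)) * integral\<^sup>L (noise_law n) (\<lambda>\<omega>. Y (restrict \<omega> B))"
proof -
  interpret prob_space "noise_law n" by (rule prob_noise)
  have "indep_var (PiM A (\<lambda>_. NN)) (\<lambda>\<omega>. restrict (\<lambda>i. \<omega> i) A) (PiM B (\<lambda>_. NN)) (\<lambda>\<omega>. restrict (\<lambda>i. \<omega> i) B)"
    by (rule indep_var_restrict[OF indep_coords[OF n] AB(3,1,2)])
  then have "indep_var borel (X \<circ> (\<lambda>\<omega>. restrict (\<lambda>i. \<omega> i) A)) borel (Y \<circ> (\<lambda>\<omega>. restrict (\<lambda>i. \<omega> i) B))"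
    by (rule indep_var_compose[OF _ X Y])
  then have "indep_var borel (\<lambda>\<omega>. X (restrict \<omega> A)) borel (\<lambda>\<omega>. Y (restrict \<omega> B))"
    by (simp add: comp_def)
  then show ?thesis using indep_var_lebesgue_integral iX iY by blast
qed



lemma mom_0: "mom 0 = 1"
proof -
  interpret prob_space NN by (rule probN)
  have "space NN = UNIV" by simp
  then show ?thesis unfolding mom_def using prob_space by simp
qed

lemma mom_Suc0: "mom (Suc 0) = 0" using mom_1 by simp

lemma coordA_meas: "j \<in> A \<Longrightarrow> (\<lambda>\<omega>. \<omega> j) \<in> borel_measurable (PiM A (\<lambda>_. NN))"
  using measurable_component_singleton[of j A "\<lambda>_. NN"] measurable_cong_sets[OF refl sets_NN] by blast

lemma mixed:
  assumes n: "n \<ge> 1" and jk: "j \<in> {1..n}" "k \<in> {1..n}" "j \<noteq> k"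
  shows "integral\<^sup>L (noise_law n) (\<lambda>\<omega>. \<omega> j ^ p * \<omega> k ^ q) = mom p * mom q"
proof -
  have "integral\<^sup>L (noise_law n) (\<lambda>\<omega>. (restrict \<omega> {j}) j ^ p * (restrict \<omega> {k}) k ^ q)
      = integral\<^sup>L (noise_law n) (\<lambda>\<omega>. (restrict \<omega> {j}) j ^ p) * integral\<^sup>L (noise_law n) (\<lambda>\<omega>. (restrict \<omega> {k}) k ^ q)"
    using jk by (intro indep_int[OF n, of "{j}" "{k}" "\<lambda>\<omega>. \<omega> j ^ p" "\<lambda>\<omega>. \<omega> k ^ q"])
      (auto intro!: good_integrable good_intros)
  then show ?thesis using jk by (simp add: coord_mom)
qed

lemma poly2:
  assumes n: "n \<ge> 1" and jk: "j \<in> {1..n}" "k \<in> {1..n}" "j \<noteq> k"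
  shows "integral\<^sup>L (noise_law n) (\<lambda>\<omega>. \<Sum>p\<le>N. \<Sum>q\<le>N. c p q * (\<omega> j ^ p * \<omega> k ^ q))
       = (\<Sum>p\<le>N. \<Sum>q\<le>N. c p q * (mom p * mom q))"
  using jk
  by (simp add: Bochner_Integration.integral_sum good_integrable good_intros mixed[OF n jk])

definition cf4 :: "real \<Rightarrow> real \<Rightarrow> real \<Rightarrow> nat \<Rightarrow> nat \<Rightarrow> real" where
  "cf4 d a b p q = (if p+q \<le> 4 then real (4 choose p) * real ((4-p) choose q) * a^p * b^q * d^(4-p-q) else 0)"
definition cf2 :: "real \<Rightarrow> real \<Rightarrow> real \<Rightarrow> nat \<Rightarrow> nat \<Rightarrow> real" where
  "cf2 d a b p q = (if p+q \<le> 2 then real (2 choose p) * real ((2-p) choose q) * a^p * b^q * d^(2-p-q) else 0)"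

lemma exp4: "(d + a*x - b*y)^4 = (\<Sum>p\<le>4. \<Sum>q\<le>4. cf4 d a (-b) p q * (x^p*y^q))"
  unfolding cf4_def by (simp add: atMost_nat_numeral binomial_fact fact_numeral) algebra
lemma exp2: "(d + a*x - b*y)^2 = (\<Sum>p\<le>2. \<Sum>q\<le>2. cf2 d a (-b) p q * (x^p*y^q))"
  unfolding cf2_def by (simp add: atMost_nat_numeral binomial_fact fact_numeral) algebra

lemma E4:
  assumes n: "n \<ge> 1" and jk: "j \<in> {1..n}" "k \<in> {1..n}" "j \<noteq> k"
  shows "integral\<^sup>L (noise_law n) (\<lambda>\<omega>. (d + a*\<omega> j - b*\<omega> k)^4) = d^4 + 6*d^2*(a^2+b^2) + 3*(a^2+b^2)^2"
  unfolding exp4 poly2[OF n jk]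
  by (simp add: cf4_def atMost_nat_numeral binomial_fact fact_numeral mom_0 mom_1 mom_Suc0 mom_2 mom_3 mom_4) algebra

lemma E2:
  assumes n: "n \<ge> 1" and jk: "j \<in> {1..n}" "k \<in> {1..n}" "j \<noteq> k"
  shows "integral\<^sup>L (noise_law n) (\<lambda>\<omega>. (d + a*\<omega> j - b*\<omega> k)^2) = d^2 + a^2 + b^2"
  unfolding exp2 poly2[OF n jk]
  by (simp add: cf2_def atMost_nat_numeral binomial_fact fact_numeral mom_0 mom_1 mom_Suc0 mom_2 mom_3 mom_4)



definition dl :: "nat \<Rightarrow> (real \<Rightarrow> real) \<Rightarrow> nat \<Rightarrow> real" where
  "dl n f i = f (real (i+2) / real n) - f (real (i+1) / real n)"
definition Dl :: "nat \<Rightarrow> (real \<Rightarrow> real) \<Rightarrow> nat \<Rightarrow> real" where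
  "Dl n f i = f (real (i+3) / real n) - f (real i / real n)"
definition Rf :: "nat \<Rightarrow> (real \<Rightarrow> real) \<Rightarrow> (nat \<Rightarrow> real) \<Rightarrow> nat \<Rightarrow> (nat \<Rightarrow> real) \<Rightarrow> real" where
  "Rf n f V i \<omega> = dl n f i + sqrt (V (i+2)) * \<omega> (i+2) - sqrt (V (i+1)) * \<omega> (i+1)"
definition Sf :: "nat \<Rightarrow> (real \<Rightarrow> real) \<Rightarrow> (nat \<Rightarrow> real) \<Rightarrow> nat \<Rightarrow> (nat \<Rightarrow> real) \<Rightarrow> real" where
  "Sf n f V i \<omega> = Dl n f i + sqrt (V (i+3)) * \<omega> (i+3) - sqrt (V i) * \<omega> i"
definition tm :: "nat \<Rightarrow> (real \<Rightarrow> real) \<Rightarrow> (nat \<Rightarrow> real) \<Rightarrow> nat \<Rightarrow> (nat \<Rightarrow> real) \<Rightarrow> real" where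
  "tm n f V i \<omega> = (1/3) * (Rf n f V i \<omega> ^ 4 + Sf n f V i \<omega> ^ 4) - 2 * Rf n f V i \<omega> ^ 2 * Sf n f V i \<omega> ^ 2"
definition tg :: "nat \<Rightarrow> (real \<Rightarrow> real) \<Rightarrow> (nat \<Rightarrow> real) \<Rightarrow> nat \<Rightarrow> real" where
  "tg n f V i = (V (i+2) + V (i+1) + dl n f i ^ 2 - V i - V (i+3) - Dl n f i ^ 2) ^ 2"

lemma T1_hat_eq: "T1_hat n f V \<omega> = (1 / real n) * (\<Sum>i = 1..n - 3. tm n f V i \<omega>)"
  unfolding T1_hat_def obsY_def Let_def tm_def Rf_def Sf_def dl_def Dl_def
  by (intro arg_cong2[where f="(*)"] refl sum.cong) (simp_all add: add.assoc algebra_simps)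

lemma T1_tilde_eq: "T1_tilde n f V = (1 / real n) * (\<Sum>i = 1..n - 3. tg n f V i)"
  unfolding T1_tilde_def Let_def tg_def dl_def Dl_def
  by (intro arg_cong2[where f="(*)"] refl sum.cong) (simp_all add: add.assoc algebra_simps)

lemma good_Rf: "1 \<le> i \<Longrightarrow> i + 3 \<le> n \<Longrightarrow> good n (Rf n f V i)"
  unfolding Rf_def by (intro good_intros) auto
lemma good_Sf: "1 \<le> i \<Longrightarrow> i + 3 \<le> n \<Longrightarrow> good n (Sf n f V i)"
  unfolding Sf_def by (intro good_intros) auto
lemma good_tm: "1 \<le> i \<Longrightarrow> i + 3 \<le> n \<Longrightarrow> good n (tm n f V i)"
  unfolding tm_def using good_Rf good_Sf by (intro good_intros) auto

lemma mean_tm: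
  assumes i: "1 \<le> i" "i + 3 \<le> n" and V: "\<forall>j\<in>{1..n}. 0 \<le> V j"
  shows "integral\<^sup>L (noise_law n) (tm n f V i) = tg n f V i - (2/3) * (dl n f i ^ 4 + Dl n f i ^ 4)"
proof -
  have n: "n \<ge> 1" using i by simp
  let ?P = "noise_law n"
  note gR = good_power[OF good_Rf[OF i]] and gS = good_power[OF good_Sf[OF i]]
  have R4: "integral\<^sup>L ?P (\<lambda>\<omega>. Rf n f V i \<omega> ^ 4) = dl n f i ^ 4 + 6 * dl n f i ^ 2 * (V (i+2) + V (i+1)) + 3 * (V (i+2) + V (i+1))^2"
    unfolding Rf_def using i V by (subst E4[OF n]) auto
  have R2: "integral\<^sup>L ?P (\<lambda>\<omega>. Rf n f V i \<omega> ^ 2) = dl n f i ^ 2 + (V (i+2) + V (i+1))"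
    unfolding Rf_def using i V by (subst E2[OF n]) auto
  have S4: "integral\<^sup>L ?P (\<lambda>\<omega>. Sf n f V i \<omega> ^ 4) = Dl n f i ^ 4 + 6 * Dl n f i ^ 2 * (V (i+3) + V i) + 3 * (V (i+3) + V i)^2"
    unfolding Sf_def using i V by (subst E4[OF n]) auto
  have S2: "integral\<^sup>L ?P (\<lambda>\<omega>. Sf n f V i \<omega> ^ 2) = Dl n f i ^ 2 + (V (i+3) + V i)"
    unfolding Sf_def using i V by (subst E2[OF n]) auto
  have RS: "integral\<^sup>L ?P (\<lambda>\<omega>. Rf n f V i \<omega> ^ 2 * Sf n f V i \<omega> ^ 2)
      = integral\<^sup>L ?P (\<lambda>\<omega>. Rf n f V i \<omega> ^ 2) * integral\<^sup>L ?P (\<lambda>\<omega>. Sf n f V i \<omega> ^ 2)"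
  proof -
    have eR: "Rf n f V i (restrict \<omega> {i+1, i+2}) = Rf n f V i \<omega>" for \<omega> by (simp add: Rf_def)
    have eS: "Sf n f V i (restrict \<omega> {i, i+3}) = Sf n f V i \<omega>" for \<omega> by (simp add: Sf_def)
    have [measurable]: "(\<lambda>\<omega>. \<omega> (i+1)) \<in> borel_measurable (PiM {i+1, i+2} (\<lambda>_. NN))"
      "(\<lambda>\<omega>. \<omega> (i+2)) \<in> borel_measurable (PiM {i+1, i+2} (\<lambda>_. NN))"
      "(\<lambda>\<omega>. \<omega> i) \<in> borel_measurable (PiM {i, i+3} (\<lambda>_. NN))"
      "(\<lambda>\<omega>. \<omega> (i+3)) \<in> borel_measurable (PiM {i, i+3} (\<lambda>_. NN))"
      by (auto intro: coordA_meas)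
    have mR: "(\<lambda>\<omega>. Rf n f V i \<omega> ^ 2) \<in> borel_measurable (PiM {i+1, i+2} (\<lambda>_. NN))"
      unfolding Rf_def by measurable
    have mS: "(\<lambda>\<omega>. Sf n f V i \<omega> ^ 2) \<in> borel_measurable (PiM {i, i+3} (\<lambda>_. NN))"
      unfolding Sf_def by measurable
    have "integral\<^sup>L ?P (\<lambda>\<omega>. Rf n f V i (restrict \<omega> {i+1, i+2}) ^ 2 * Sf n f V i (restrict \<omega> {i, i+3}) ^ 2)
      = integral\<^sup>L ?P (\<lambda>\<omega>. Rf n f V i (restrict \<omega> {i+1, i+2}) ^ 2) * integral\<^sup>L ?P (\<lambda>\<omega>. Sf n f V i (restrict \<omega> {i, i+3}) ^ 2)"
      using i
      apply -
      apply (rule indep_int[OF n, of "{i+1, i+2}" "{i, i+3}" "\<lambda>\<omega>. Rf n f V i \<omega> ^ 2" "\<lambda>\<omega>. Sf n f V i \<omega> ^ 2"])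
      apply auto[3]
      apply (rule mR)
      apply (rule mS)
      apply (simp only: eR, rule good_integrable[OF gR])
      apply (simp only: eS, rule good_integrable[OF gS])
      done
    then show ?thesis by (simp only: eR eS)
  qed
  have "integral\<^sup>L ?P (tm n f V i) = (1/3) * (integral\<^sup>L ?P (\<lambda>\<omega>. Rf n f V i \<omega> ^ 4) + integral\<^sup>L ?P (\<lambda>\<omega>. Sf n f V i \<omega> ^ 4))
      - 2 * integral\<^sup>L ?P (\<lambda>\<omega>. Rf n f V i \<omega> ^ 2 * Sf n f V i \<omega> ^ 2)"
    unfolding tm_def
    by (simp add: Bochner_Integration.integral_diff Bochner_Integration.integral_add good_integrable
        gR gS good_mult mult.assoc)
  also have "\<dots> = tg n f V i - (2/3) * (dl n f i ^ 4 + Dl n f i ^ 4)"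
    unfolding RS R4 R2 S4 S2 tg_def by algebra
  finally show ?thesis .
qed



lemma lin8:
  fixes d u v x y M :: real
  assumes "\<bar>d\<bar> \<le> 2*M" "0 \<le> u" "u \<le> M" "0 \<le> v" "v \<le> M"
  shows "(d + sqrt u * x - sqrt v * y)^8 \<le> 2^16 * (M^8 + M^4 * x^8 + M^4 * y^8)"
proof -
  have M: "0 \<le> M" using assms by linarith
  have "(d + sqrt u * x - sqrt v * y)^8 = \<bar>d + (sqrt u * x + (- (sqrt v * y)))\<bar>^8"
    by (simp add: power_even_abs_numeral algebra_simps)
  also have "\<dots> \<le> 2^8 * (\<bar>d\<bar>^8 + \<bar>sqrt u * x + (- (sqrt v * y))\<bar>^8)" by (rule pow_abs_add_le)
  also have "\<bar>sqrt u * x + (- (sqrt v * y))\<bar>^8 \<le> 2^8 * (\<bar>sqrt u * x\<bar>^8 + \<bar>- (sqrt v * y)\<bar>^8)"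
    by (rule pow_abs_add_le)
  also have "\<bar>sqrt u * x\<bar>^8 = u^4 * x^8"
  proof -
    have "\<bar>sqrt u * x\<bar>^8 = ((sqrt u)^2)^4 * x^8" by (simp add: abs_mult power_mult_distrib power_even_abs_numeral flip: power_mult)
    then show ?thesis using assms by simp
  qed
  also have "\<bar>- (sqrt v * y)\<bar>^8 = v^4 * y^8"
  proof -
    have "\<bar>- (sqrt v * y)\<bar>^8 = ((sqrt v)^2)^4 * y^8" by (simp add: abs_mult power_mult_distrib power_even_abs_numeral flip: power_mult)
    then show ?thesis using assms by simp
  qed
  also have "\<bar>d\<bar>^8 \<le> (2*M)^8" using assms by (intro power_mono) auto
  also have "u^4 * x^8 \<le> M^4 * x^8" using assms by (intro mult_right_mono power_mono) auto
  also have "v^4 * y^8 \<le> M^4 * y^8" using assms by (intro mult_right_mono power_mono) auto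
  finally show ?thesis by (simp add: algebra_simps)
qed

lemma tm_sq_pt: "((1/3) * (r^4 + s^4) - 2 * r^2 * s^2)^2 \<le> 4 * (r^8 + (s::real)^8)"
proof -
  define A where "A = r^4" define B where "B = s^4" define C where "C = r^2 * s^2"
  define S where "S = A + B"
  have A: "0 \<le> A" "0 \<le> B" "0 \<le> C" unfolding A_def B_def C_def by auto
  have S0: "0 \<le> S" unfolding S_def using A by linarith
  have hC: "2 * C \<le> S" unfolding S_def A_def B_def C_def using sum_squares_bound[of "r^2" "s^2"]
    by (simp add: power_mult[symmetric] mult.assoc)
  have "\<bar>S/3 - 2 * C\<bar> \<le> S" using S0 A(3) hC by (simp add: abs_le_iff)
  then have "(S/3 - 2 * C)^2 \<le> S^2" using abs_le_square_iff[of "S/3 - 2*C" S] S0 by simp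
  also have "S^2 \<le> 2 * (A^2 + B^2)"
  proof -
    have e: "2 * (A^2 + B^2) = A^2 + B^2 + (A^2 + B^2)" by simp
    show ?thesis unfolding S_def power2_sum e using sum_squares_bound[of A B] by linarith
  qed
  finally have 1: "(S/3 - 2 * C)^2 \<le> 2 * (A^2 + B^2)" .
  have 2: "(1/3) * (r^4 + s^4) - 2 * r^2 * s^2 = S/3 - 2 * C" unfolding S_def A_def B_def C_def by simp
  have 3: "A^2 = r^8" "B^2 = s^8" unfolding A_def B_def by (simp_all flip: power_mult)
  have r8: "0 \<le> r^8" "0 \<le> s^8" using 3 by (metis zero_le_power2)+
  have h1: "(S/3 - 2 * C)^2 \<le> 2 * r^8 + 2 * s^8" using 1 3 by simp
  have "2 * r^8 + 2 * s^8 \<le> 4 * (r^8 + s^8)" unfolding distrib_left using r8 by linarith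
  with h1 show ?thesis unfolding 2 by linarith
qed

definition KK :: "real \<Rightarrow> real" where "KK M = 2^19 * (M^8 + 2 * M^4 * mom 8)"

lemma KK_nonneg: "0 \<le> M \<Longrightarrow> 0 \<le> KK M"
  unfolding KK_def using mom_8_nonneg by simp

lemma E8_bound:
  assumes n: "n \<ge> 1" and jk: "j \<in> {1..n}" "k \<in> {1..n}"
    and a: "\<bar>d\<bar> \<le> 2*M" "0 \<le> u" "u \<le> M" "0 \<le> v" "v \<le> M"
  shows "integral\<^sup>L (noise_law n) (\<lambda>\<omega>. (d + sqrt u * \<omega> j - sqrt v * \<omega> k)^8) \<le> 2^16 * (M^8 + 2 * M^4 * mom 8)"
proof -
  have "integral\<^sup>L (noise_law n) (\<lambda>\<omega>. (d + sqrt u * \<omega> j - sqrt v * \<omega> k)^8)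
     \<le> integral\<^sup>L (noise_law n) (\<lambda>\<omega>. 2^16 * (M^8 + M^4 * \<omega> j^8 + M^4 * \<omega> k^8))"
    using jk by (intro integral_mono good_integrable good_intros lin8[OF a]) auto
  also have "\<dots> = 2^16 * (M^8 + M^4 * mom 8 + M^4 * mom 8)"
  proof -
    interpret prob_space "noise_law n" by (rule prob_noise)
    show ?thesis using jk
      by (simp add: Bochner_Integration.integral_add good_integrable good_intros coord_mom prob_space)
  qed
  finally show ?thesis by (simp add: algebra_simps)
qed

lemma tm2_bound:
  assumes i: "1 \<le> i" "i + 3 \<le> n" and V: "\<forall>j\<in>{1..n}. 0 \<le> V j \<and> V j \<le> M"
    and hf: "\<forall>x\<in>{0..1}. \<bar>f x\<bar> \<le> M"
  shows "integral\<^sup>L (noise_law n) (\<lambda>\<omega>. tm n f V i \<omega> ^ 2) \<le> KK M"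
proof -
  have n: "n \<ge> 1" using i by simp
  have fb: "\<bar>f (real k / real n)\<bar> \<le> M" if "k \<le> n" for k
    using hf that n by (auto simp: field_simps)
  have dlb: "\<bar>dl n f i\<bar> \<le> 2*M" unfolding dl_def using fb[of "i+2"] fb[of "i+1"] i by linarith
  have Dlb: "\<bar>Dl n f i\<bar> \<le> 2*M" unfolding Dl_def using fb[of "i+3"] fb[of "i"] i by linarith
  have pt: "\<And>\<omega>. tm n f V i \<omega> ^ 2 \<le> 4 * (Rf n f V i \<omega> ^ 8 + Sf n f V i \<omega> ^ 8)"
    unfolding tm_def by (rule tm_sq_pt)
  have pt': "\<And>\<omega>. tm n f V i \<omega> ^ 2 \<le> 4 * Rf n f V i \<omega> ^ 8 + 4 * Sf n f V i \<omega> ^ 8"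
    using pt by (simp add: distrib_left)
  have "integral\<^sup>L (noise_law n) (\<lambda>\<omega>. tm n f V i \<omega> ^ 2)
     \<le> integral\<^sup>L (noise_law n) (\<lambda>\<omega>. 4 * (Rf n f V i \<omega> ^ 8 + Sf n f V i \<omega> ^ 8))"
    using i by (intro integral_mono good_integrable good_intros good_tm good_Rf good_Sf)
      (auto intro: pt')
  also have "\<dots> = 4 * (integral\<^sup>L (noise_law n) (\<lambda>\<omega>. Rf n f V i \<omega> ^ 8) + integral\<^sup>L (noise_law n) (\<lambda>\<omega>. Sf n f V i \<omega> ^ 8))"
    using i by (simp add: Bochner_Integration.integral_add good_integrable good_intros good_Rf good_Sf)
  also have "integral\<^sup>L (noise_law n) (\<lambda>\<omega>. Rf n f V i \<omega> ^ 8) \<le> 2^16 * (M^8 + 2 * M^4 * mom 8)"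
    unfolding Rf_def using i V by (intro E8_bound[OF n] dlb) auto
  also have "integral\<^sup>L (noise_law n) (\<lambda>\<omega>. Sf n f V i \<omega> ^ 8) \<le> 2^16 * (M^8 + 2 * M^4 * mom 8)"
    unfolding Sf_def using i V by (intro E8_bound[OF n] Dlb) auto
  finally show ?thesis by (simp add: KK_def algebra_simps)
qed



definition mu :: "nat \<Rightarrow> (real \<Rightarrow> real) \<Rightarrow> (nat \<Rightarrow> real) \<Rightarrow> nat \<Rightarrow> real" where
  "mu n f V i = integral\<^sup>L (noise_law n) (tm n f V i)"
definition Zf :: "nat \<Rightarrow> (real \<Rightarrow> real) \<Rightarrow> (nat \<Rightarrow> real) \<Rightarrow> nat \<Rightarrow> (nat \<Rightarrow> real) \<Rightarrow> real" where
  "Zf n f V i \<omega> = tm n f V i \<omega> - mu n f V i"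

lemma good_Z: "1 \<le> i \<Longrightarrow> i + 3 \<le> n \<Longrightarrow> good n (Zf n f V i)"
  unfolding Zf_def using good_tm by (intro good_intros) auto

lemma EZ2:
  assumes i: "1 \<le> i" "i + 3 \<le> n" and V: "\<forall>j\<in>{1..n}. 0 \<le> V j \<and> V j \<le> M"
    and hf: "\<forall>x\<in>{0..1}. \<bar>f x\<bar> \<le> M"
  shows "integral\<^sup>L (noise_law n) (\<lambda>\<omega>. Zf n f V i \<omega> ^ 2) \<le> KK M"
proof -
  interpret prob_space "noise_law n" by (rule prob_noise)
  note g = good_tm[OF i, of f V]
  have "integral\<^sup>L (noise_law n) (\<lambda>\<omega>. Zf n f V i \<omega> ^ 2)
      = integral\<^sup>L (noise_law n) (\<lambda>\<omega>. tm n f V i \<omega> ^ 2 - 2 * mu n f V i * tm n f V i \<omega> + mu n f V i ^ 2)"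
    unfolding Zf_def by (rule Bochner_Integration.integral_cong[OF refl]) (simp add: power2_eq_square algebra_simps)
  also have "\<dots> = integral\<^sup>L (noise_law n) (\<lambda>\<omega>. tm n f V i \<omega> ^ 2) - 2 * mu n f V i * mu n f V i + mu n f V i ^ 2"
    using g
    by (simp add: Bochner_Integration.integral_add Bochner_Integration.integral_diff good_integrable good_intros
        prob_space mu_def[symmetric])
  also have "\<dots> \<le> integral\<^sup>L (noise_law n) (\<lambda>\<omega>. tm n f V i \<omega> ^ 2)" by (simp add: power2_eq_square)
  also have "\<dots> \<le> KK M" by (rule tm2_bound[OF i V hf])
  finally show ?thesis .
qed

lemma EZZ_near:
  assumes i: "1 \<le> i" "i + 3 \<le> n" and j: "1 \<le> j" "j + 3 \<le> n" and V: "\<forall>j\<in>{1..n}. 0 \<le> V j \<and> V j \<le> M"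
    and hf: "\<forall>x\<in>{0..1}. \<bar>f x\<bar> \<le> M"
  shows "integral\<^sup>L (noise_law n) (\<lambda>\<omega>. Zf n f V i \<omega> * Zf n f V j \<omega>) \<le> KK M"
proof -
  have "integral\<^sup>L (noise_law n) (\<lambda>\<omega>. Zf n f V i \<omega> * Zf n f V j \<omega>)
     \<le> integral\<^sup>L (noise_law n) (\<lambda>\<omega>. (1/2) * (Zf n f V i \<omega> ^ 2) + (1/2) * (Zf n f V j \<omega> ^ 2))"
  proof (intro integral_mono good_integrable good_intros good_Z i j)
    fix \<omega>
    show "Zf n f V i \<omega> * Zf n f V j \<omega> \<le> 1 / 2 * (Zf n f V i \<omega> ^ 2) + 1 / 2 * (Zf n f V j \<omega> ^ 2)"
      using sum_squares_bound[of "Zf n f V i \<omega>" "Zf n f V j \<omega>"] by (simp add: mult.assoc)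
  qed
  also have "\<dots> = (1/2) * integral\<^sup>L (noise_law n) (\<lambda>\<omega>. Zf n f V i \<omega> ^ 2) + (1/2) * integral\<^sup>L (noise_law n) (\<lambda>\<omega>. Zf n f V j \<omega> ^ 2)"
    using i j by (simp add: Bochner_Integration.integral_add good_integrable good_intros good_Z)
  also have "\<dots> \<le> (1/2) * KK M + (1/2) * KK M"
    using EZ2[OF i V hf] EZ2[OF j V hf] by linarith
  finally show ?thesis by simp
qed

lemma EZ_zero: "1 \<le> i \<Longrightarrow> i + 3 \<le> n \<Longrightarrow> integral\<^sup>L (noise_law n) (Zf n f V i) = 0"
proof -
  assume i: "1 \<le> i" "i + 3 \<le> n"
  interpret prob_space "noise_law n" by (rule prob_noise)
  show ?thesis unfolding Zf_def using good_tm[OF i, of f V]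
    by (simp add: Bochner_Integration.integral_diff good_integrable prob_space mu_def)
qed

lemma EZZ_far:
  assumes i: "1 \<le> i" and ij: "i + 4 \<le> j" and j: "j + 3 \<le> n"
  shows "integral\<^sup>L (noise_law n) (\<lambda>\<omega>. Zf n f V i \<omega> * Zf n f V j \<omega>) = 0"
proof -
  have n: "n \<ge> 1" using i ij j by simp
  have i3: "i + 3 \<le> n" "1 \<le> j" using ij j i by auto
  have eA: "Zf n f V i (restrict \<omega> {i..i+3}) = Zf n f V i \<omega>" for \<omega>
    by (simp add: Zf_def tm_def Rf_def Sf_def)
  have eB: "Zf n f V j (restrict \<omega> {j..j+3}) = Zf n f V j \<omega>" for \<omega>
    by (simp add: Zf_def tm_def Rf_def Sf_def)
  have [measurable]: "(\<lambda>\<omega>. \<omega> (i+k)) \<in> borel_measurable (PiM {i..i+3} (\<lambda>_. NN))" if "k \<le> 3" for k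
    using that by (intro coordA_meas) auto
  have [measurable]: "(\<lambda>\<omega>. \<omega> (j+k)) \<in> borel_measurable (PiM {j..j+3} (\<lambda>_. NN))" if "k \<le> 3" for k
    using that by (intro coordA_meas) auto
  have mA: "Zf n f V i \<in> borel_measurable (PiM {i..i+3} (\<lambda>_. NN))"
  proof -
    have [measurable]: "(\<lambda>\<omega>. \<omega> i) \<in> borel_measurable (PiM {i..i+3} (\<lambda>_. NN))"
      using coordA_meas[of i "{i..i+3}"] by auto
    show ?thesis unfolding Zf_def tm_def Rf_def Sf_def by measurable
  qed
  have mB: "Zf n f V j \<in> borel_measurable (PiM {j..j+3} (\<lambda>_. NN))"
  proof -
    have [measurable]: "(\<lambda>\<omega>. \<omega> j) \<in> borel_measurable (PiM {j..j+3} (\<lambda>_. NN))"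
      using coordA_meas[of j "{j..j+3}"] by auto
    show ?thesis unfolding Zf_def tm_def Rf_def Sf_def by measurable
  qed
  have "integral\<^sup>L (noise_law n) (\<lambda>\<omega>. Zf n f V i (restrict \<omega> {i..i+3}) * Zf n f V j (restrict \<omega> {j..j+3}))
      = integral\<^sup>L (noise_law n) (\<lambda>\<omega>. Zf n f V i (restrict \<omega> {i..i+3})) * integral\<^sup>L (noise_law n) (\<lambda>\<omega>. Zf n f V j (restrict \<omega> {j..j+3}))"
    apply (rule indep_int[OF n])
    using i ij j apply auto[3]
    apply (rule mA)
    apply (rule mB)
    apply (simp only: eA, rule good_integrable[OF good_Z[OF i i3(1)]])
    apply (simp only: eB, rule good_integrable[OF good_Z[OF i3(2) j]])
    done
  then show ?thesis by (simp only: eA eB EZ_zero[OF i3(2) j] mult_zero_right)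
qed



lemma card_near: "card {j \<in> I. j < i + 4 \<and> i < j + 4} \<le> (7::nat)" for I :: "nat set"
proof -
  have "{j \<in> I. j < i + 4 \<and> i < j + 4} \<subseteq> {i - 3..i + 3}" by auto
  then have "card {j \<in> I. j < i + 4 \<and> i < j + 4} \<le> card {i - 3..i + 3}" by (intro card_mono) auto
  also have "\<dots> \<le> 7" by simp
  finally show ?thesis .
qed

lemma var_sum:
  assumes V: "\<forall>j\<in>{1..n}. 0 \<le> V j \<and> V j \<le> M" and hf: "\<forall>x\<in>{0..1}. \<bar>f x\<bar> \<le> M" and M: "0 \<le> M"
  shows "integral\<^sup>L (noise_law n) (\<lambda>\<omega>. (\<Sum>i\<in>{1..n-3}. Zf n f V i \<omega>)^2) \<le> 7 * real n * KK M"
proof -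
  let ?I = "{1..n-3}"
  let ?P = "noise_law n"
  have iI: "1 \<le> i" "i + 3 \<le> n" if "i \<in> ?I" for i using that by auto
  have "integral\<^sup>L ?P (\<lambda>\<omega>. (\<Sum>i\<in>?I. Zf n f V i \<omega>)^2) = integral\<^sup>L ?P (\<lambda>\<omega>. \<Sum>i\<in>?I. \<Sum>j\<in>?I. Zf n f V i \<omega> * Zf n f V j \<omega>)"
    by (simp add: power2_eq_square sum_product)
  also have "\<dots> = (\<Sum>i\<in>?I. \<Sum>j\<in>?I. integral\<^sup>L ?P (\<lambda>\<omega>. Zf n f V i \<omega> * Zf n f V j \<omega>))"
  proof -
    have gi: "good n (\<lambda>\<omega>. Zf n f V i \<omega> * Zf n f V j \<omega>)" if "i \<in> ?I" "j \<in> ?I" for i j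
      using iI[OF that(1)] iI[OF that(2)] by (intro good_mult good_Z)
    show ?thesis
      by (subst Bochner_Integration.integral_sum)
         (auto intro!: good_integrable good_sum gi sum.cong Bochner_Integration.integral_sum)
  qed
  also have "\<dots> \<le> (\<Sum>i\<in>?I. \<Sum>j\<in>?I. (if j < i + 4 \<and> i < j + 4 then KK M else 0))"
  proof (intro sum_mono)
    fix i j assume i: "i \<in> ?I" and j: "j \<in> ?I"
    show "integral\<^sup>L ?P (\<lambda>\<omega>. Zf n f V i \<omega> * Zf n f V j \<omega>) \<le> (if j < i + 4 \<and> i < j + 4 then KK M else 0)"
    proof (cases "j < i + 4 \<and> i < j + 4")
      case True
      then show ?thesis using EZZ_near[OF iI[OF i] iI[OF j] V hf] by simp
    next
      case False
      then consider "i + 4 \<le> j" | "j + 4 \<le> i" by linarith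
      then show ?thesis
      proof cases
        case 1 then show ?thesis using EZZ_far[OF iI(1)[OF i] 1 iI(2)[OF j]] False by simp
      next
        case 2 then show ?thesis using EZZ_far[OF iI(1)[OF j] 2 iI(2)[OF i], of f V] False
          by (simp add: mult.commute)
      qed
    qed
  qed
  also have "\<dots> = (\<Sum>i\<in>?I. KK M * real (card {j \<in> ?I. j < i + 4 \<and> i < j + 4}))"
    by (intro sum.cong refl) (simp add: sum.inter_filter[symmetric])
  also have "\<dots> \<le> (\<Sum>i\<in>?I. KK M * 7)"
  proof (intro sum_mono mult_left_mono)
    fix i
    have "real (card {j \<in> ?I. j < i + 4 \<and> i < j + 4}) \<le> real (7::nat)" by (rule of_nat_mono[OF card_near])
    then show "real (card {j \<in> ?I. j < i + 4 \<and> i < j + 4}) \<le> 7" by simp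
  qed (use KK_nonneg[OF M] in auto)
  also have "\<dots> = real (n - 3) * KK M * 7" by simp
  also have "\<dots> \<le> real n * KK M * 7"
    using KK_nonneg[OF M] by (intro mult_right_mono) auto
  finally show ?thesis by (simp add: mult_ac)
qed



lemma holder_bound:
  assumes "holder_class \<alpha> M f" shows "\<forall>x\<in>{0..1}. \<bar>f x\<bar> \<le> M"
proof -
  obtain D where D0: "\<forall>x\<in>{0..1}. D 0 x = f x" and Db: "\<forall>j \<le> nat \<lfloor>\<alpha>\<rfloor>. \<forall>x\<in>{0..1}. \<bar>D j x\<bar> \<le> M"
    using assms unfolding holder_class_def by blast
  show ?thesis using D0 Db by force
qed

lemma holder_lip:
  assumes h: "holder_class \<alpha> M f" and a: "\<alpha> > 0" and x: "x \<in> {0..1}" and y: "y \<in> {0..1}"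
  shows "\<bar>f x - f y\<bar> \<le> M * \<bar>x - y\<bar> powr (min \<alpha> 1)"
proof -
  obtain D where D0: "\<forall>x\<in>{0..1}. D 0 x = f x"
    and Dd: "\<forall>j < nat \<lfloor>\<alpha>\<rfloor>. \<forall>x\<in>{0..1}. (D j has_real_derivative D (Suc j) x) (at x within {0..1})"
    and Db: "\<forall>j \<le> nat \<lfloor>\<alpha>\<rfloor>. \<forall>x\<in>{0..1}. \<bar>D j x\<bar> \<le> M"
    and Dh: "\<forall>x\<in>{0..1}. \<forall>y\<in>{0..1}. \<bar>D (nat \<lfloor>\<alpha>\<rfloor>) x - D (nat \<lfloor>\<alpha>\<rfloor>) y\<bar> \<le> M * \<bar>x - y\<bar> powr (\<alpha> - of_int \<lfloor>\<alpha>\<rfloor>)"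
    using h unfolding holder_class_def by blast
  show ?thesis
  proof (cases "\<alpha> < 1")
    case True
    then have fl: "\<lfloor>\<alpha>\<rfloor> = 0" using a by (simp add: floor_eq_iff)
    have "\<bar>D 0 x - D 0 y\<bar> \<le> M * \<bar>x - y\<bar> powr \<alpha>" using Dh x y fl by simp
    then show ?thesis using D0 x y True by simp
  next
    case False
    then have fl: "0 < nat \<lfloor>\<alpha>\<rfloor>" by simp
    have "norm (D 0 x - D 0 y) \<le> M * norm (x - y)"
    proof (rule field_differentiable_bound[of "{0..1}"])
      show "convex {0..1::real}" by (rule convex_real_interval)
      show "(D 0 has_field_derivative D (Suc 0) z) (at z within {0..1})" if "z \<in> {0..1}" for z
        using Dd fl that by blast
      show "norm (D (Suc 0) z) \<le> M" if "z \<in> {0..1}" for z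
        using Db fl that by (simp add: Suc_le_eq)
    qed (use x y in auto)
    then show ?thesis using D0 x y False by simp
  qed
qed



theorem proposition4p4:
  fixes \<alpha> M :: real
  assumes "\<alpha> > 0" and "M > 0"
  shows "\<exists>C > 0. \<forall>(n::nat) (f::real \<Rightarrow> real) (V::nat \<Rightarrow> real).
           n \<ge> 1 \<longrightarrow> holder_class \<alpha> M f \<longrightarrow> (\<forall>i\<in>{1..n}. 0 \<le> V i \<and> V i \<le> M) \<longrightarrow>
           (\<integral>\<^sup>+ \<xi>. ennreal ((T1_hat n f V \<xi> - T1_tilde n f V)\<^sup>2) \<partial>noise_law n)
             \<le> ennreal (C * (1 / real n + real n powr (- 8 * \<alpha>)))"
proof -
  have a: "\<alpha> > 0" and M: "M > 0" using assms by auto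
  define \<beta> where "\<beta> = min \<alpha> 1"
  define C where "C = 14 * KK M + 6050 * M^8 + 1"
  have KK0: "0 \<le> KK M" using KK_nonneg M by simp
  have Cpos: "C > 0" unfolding C_def using KK0 M by (simp add: add_nonneg_pos)
  show ?thesis
  proof (intro exI[of _ C] conjI allI impI)
    show "C > 0" by (rule Cpos)
    fix n :: nat and f :: "real \<Rightarrow> real" and V :: "nat \<Rightarrow> real"
    assume n: "n \<ge> 1" and h: "holder_class \<alpha> M f" and V: "\<forall>i\<in>{1..n}. 0 \<le> V i \<and> V i \<le> M"
    interpret prob_space "noise_law n" by (rule prob_noise)
    let ?P = "noise_law n"
    let ?I = "{1..n-3}"
    have iI: "1 \<le> i" "i + 3 \<le> n" if "i \<in> ?I" for i using that by auto
    have V0: "\<forall>j\<in>{1..n}. 0 \<le> V j" using V by auto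
    have hf: "\<forall>x\<in>{0..1}. \<bar>f x\<bar> \<le> M" by (rule holder_bound[OF h])
    have npos: "real n > 0" using n by simp
    define q where "q = real n powr (- \<beta>)"
    have q0: "0 \<le> q" unfolding q_def by simp
    have q_eq: "(1 / real n) powr \<beta> = q" unfolding q_def by (simp add: powr_divide powr_minus_divide)
    have b1: "\<beta> \<le> 1" unfolding \<beta>_def by simp
    have pt01: "real k / real n \<in> {0..1}" if "k \<le> n" for k using that npos by (auto simp: field_simps)
    have dlb: "\<bar>dl n f i\<bar> \<le> M * q" if "i \<in> ?I" for i
    proof -
      have "\<bar>dl n f i\<bar> \<le> M * \<bar>real (i+2) / real n - real (i+1) / real n\<bar> powr \<beta>"
        unfolding dl_def \<beta>_def using iI[OF that] by (intro holder_lip[OF h a] pt01) auto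
      also have "\<bar>real (i+2) / real n - real (i+1) / real n\<bar> = 1 / real n"
        using npos by (simp add: field_simps)
      finally show ?thesis using q_eq by simp
    qed
    have Dlb: "\<bar>Dl n f i\<bar> \<le> 3 * M * q" if "i \<in> ?I" for i
    proof -
      have "\<bar>Dl n f i\<bar> \<le> M * \<bar>real (i+3) / real n - real i / real n\<bar> powr \<beta>"
        unfolding Dl_def \<beta>_def using iI[OF that] by (intro holder_lip[OF h a] pt01) auto
      also have "\<bar>real (i+3) / real n - real i / real n\<bar> = 3 * (1 / real n)"
        using npos by (simp add: field_simps)
      also have "(3 * (1 / real n)) powr \<beta> = 3 powr \<beta> * q" using q_eq powr_mult[of 3 "1 / real n" \<beta>] by simp
      also have "3 powr \<beta> \<le> 3" using powr_mono[OF b1, of 3] by simp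
      finally show ?thesis using M q0 by (simp add: mult_left_mono mult_right_mono mult.assoc)
    qed
    have bias_i: "\<bar>mu n f V i - tg n f V i\<bar> \<le> 55 * M^4 * q^4" if "i \<in> ?I" for i
    proof -
      have e: "mu n f V i - tg n f V i = - (2/3) * (dl n f i ^ 4 + Dl n f i ^ 4)"
        unfolding mu_def using mean_tm[OF iI[OF that] V0] by simp
      have d4: "dl n f i ^ 4 \<le> (M * q)^4"
        using power_mono[OF dlb[OF that], of 4] by (simp add: power_even_abs_numeral)
      have D4: "Dl n f i ^ 4 \<le> (3 * M * q)^4"
        using power_mono[OF Dlb[OF that], of 4] by (simp add: power_even_abs_numeral)
      have nn: "0 \<le> dl n f i ^ 4 + Dl n f i ^ 4" by simp
      have "\<bar>mu n f V i - tg n f V i\<bar> = (2/3) * (dl n f i ^ 4 + Dl n f i ^ 4)"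
        unfolding e using nn by simp
      also have "\<dots> \<le> (2/3) * ((M * q)^4 + (3 * M * q)^4)" using d4 D4 by simp
      also have "\<dots> = (164/3) * (M^4 * q^4)" by (simp add: power_mult_distrib)
      also have "\<dots> \<le> 55 * M^4 * q^4"
      proof -
        have X: "0 \<le> M^4 * q^4" using q0 by simp
        show ?thesis using X by (simp only: mult.assoc)
      qed
      finally show ?thesis .
    qed
    define Bc where "Bc = (1 / real n) * (\<Sum>i\<in>?I. (mu n f V i - tg n f V i))"
    have Bcb: "Bc^2 \<le> 3025 * M^8 * q^8"
    proof -
      have "\<bar>Bc\<bar> \<le> (1 / real n) * (\<Sum>i\<in>?I. \<bar>mu n f V i - tg n f V i\<bar>)"
      proof -
        have "\<bar>1 / real n\<bar> = 1 / real n" using npos by simp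
        then show ?thesis unfolding Bc_def abs_mult using npos by (simp only:) (intro mult_left_mono sum_abs, auto)
      qed
      also have "\<dots> \<le> (1 / real n) * (\<Sum>i\<in>?I. 55 * M^4 * q^4)"
        using bias_i npos by (intro mult_left_mono sum_mono) auto
      also have "\<dots> = (real (n - 3) / real n) * (55 * M^4 * q^4)" by simp
      also have "\<dots> \<le> 1 * (55 * M^4 * q^4)"
        using npos q0 M by (intro mult_right_mono) (auto simp: field_simps)
      finally have "\<bar>Bc\<bar> \<le> 55 * M^4 * q^4" by simp
      then have "\<bar>Bc\<bar>^2 \<le> (55 * M^4 * q^4)^2" by (intro power_mono) auto
      then show ?thesis by (simp add: power_mult_distrib flip: power_mult)
    qed
    have decomp: "T1_hat n f V \<omega> - T1_tilde n f V = (1 / real n) * (\<Sum>i\<in>?I. Zf n f V i \<omega>) + Bc" for \<omega>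
      unfolding T1_hat_eq T1_tilde_eq Bc_def Zf_def
      by (simp add: sum_subtractf algebra_simps)
    have gS: "good n (\<lambda>\<omega>. \<Sum>i\<in>?I. Zf n f V i \<omega>)"
      by (intro good_sum good_Z) auto
    have gall: "good n (\<lambda>\<omega>. (T1_hat n f V \<omega> - T1_tilde n f V)\<^sup>2)"
      unfolding decomp by (intro good_intros gS)
    have "integral\<^sup>L ?P (\<lambda>\<omega>. (T1_hat n f V \<omega> - T1_tilde n f V)\<^sup>2)
        \<le> integral\<^sup>L ?P (\<lambda>\<omega>. 2 * (1 / real n)^2 * (\<Sum>i\<in>?I. Zf n f V i \<omega>)^2 + 2 * Bc^2)"
    proof (intro integral_mono good_integrable gall good_intros gS)
      fix \<omega>
      have "(x + y)^2 \<le> 2 * x^2 + 2 * y^2" for x y :: real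
        using sum_squares_bound[of x y] by (simp add: power2_sum)
      from this[of "(1 / real n) * (\<Sum>i\<in>?I. Zf n f V i \<omega>)" Bc]
      show "(T1_hat n f V \<omega> - T1_tilde n f V)\<^sup>2 \<le> 2 * (1 / real n)^2 * (\<Sum>i\<in>?I. Zf n f V i \<omega>)^2 + 2 * Bc^2"
        unfolding decomp power_mult_distrib mult.assoc .
    qed (auto intro: good_Z)
    also have "\<dots> = 2 * (1 / real n)^2 * integral\<^sup>L ?P (\<lambda>\<omega>. (\<Sum>i\<in>?I. Zf n f V i \<omega>)^2) + 2 * Bc^2"
      using gS by (simp add: Bochner_Integration.integral_add good_integrable good_intros prob_space)
    also have "\<dots> \<le> 2 * (1 / real n)^2 * (7 * real n * KK M) + 2 * (3025 * M^8 * q^8)"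
      using var_sum[OF V hf] M Bcb by (intro add_mono mult_left_mono) auto
    also have "\<dots> = 14 * KK M * (1 / real n) + 6050 * M^8 * q^8"
      using npos by (simp add: field_simps power2_eq_square)
    also have "\<dots> \<le> 14 * KK M * (1 / real n + real n powr (- 8 * \<alpha>)) + 6050 * M^8 * (1 / real n + real n powr (- 8 * \<alpha>))"
    proof (intro add_mono mult_left_mono)
      show "1 / real n \<le> 1 / real n + real n powr (- 8 * \<alpha>)" by simp
      have q8: "q^8 = real n powr (- 8 * \<beta>)"
        unfolding q_def using npos by (simp add: powr_power)
      show "q^8 \<le> 1 / real n + real n powr (- 8 * \<alpha>)"
      proof (cases "\<alpha> \<le> 1")
        case True
        then show ?thesis unfolding q8 \<beta>_def using npos by simp
      next
        case False
        then have "\<beta> = 1" unfolding \<beta>_def by simp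
        then have "q^8 = real n powr (- 8)" unfolding q8 by simp
        also have "\<dots> \<le> real n powr (- 1)" using n by (intro powr_mono) auto
        also have "\<dots> = 1 / real n" using npos by (simp add: powr_minus_divide)
        finally have "q^8 \<le> 1 / real n" .
        then show ?thesis using powr_ge_zero[of "real n" "- 8 * \<alpha>"] by linarith
      qed
    qed (use KK0 M in auto)
    also have "\<dots> \<le> C * (1 / real n + real n powr (- 8 * \<alpha>))"
      unfolding C_def by (simp add: algebra_simps)
    finally have main: "integral\<^sup>L ?P (\<lambda>\<omega>. (T1_hat n f V \<omega> - T1_tilde n f V)\<^sup>2) \<le> C * (1 / real n + real n powr (- 8 * \<alpha>))" .
    have "(\<integral>\<^sup>+ \<xi>. ennreal ((T1_hat n f V \<xi> - T1_tilde n f V)\<^sup>2) \<partial>?P)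
        = ennreal (integral\<^sup>L ?P (\<lambda>\<omega>. (T1_hat n f V \<omega> - T1_tilde n f V)\<^sup>2))"
      by (intro nn_integral_eq_integral good_integrable gall) auto
    also have "\<dots> \<le> ennreal (C * (1 / real n + real n powr (- 8 * \<alpha>)))"
      using main by (rule ennreal_leI)
    finally show "(\<integral>\<^sup>+ \<xi>. ennreal ((T1_hat n f V \<xi> - T1_tilde n f V)\<^sup>2) \<partial>?P)
        \<le> ennreal (C * (1 / real n + real n powr (- 8 * \<alpha>)))" .
  qed
qed

end
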